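(* In the algorithm Mono-DMFW described in the context, let $\bar{\mathbf{x}}^{(k)}(q)=\frac1N\sum_{i=1}^N\mathbf{x}_i^{(k)}(q)$. If the weight matrix $\mathbf{A}$ is symmetric and doubly stochastic with $\beta<1$, then for any $k\in[K]$ and $q\in[Q]$, $$\sqrt{\sum_{i=1}^{N}\|\mathbf{x}_{i}^{(k)}(q)-\bar{\mathbf{x}}^{(k)}(q)\|^{2}}\le\frac{\sqrt{N}r(\mathcal{K})}{K(1-\beta)}.$$
   Context: $\mathcal{K}\subseteq\mathbb{R}^n$ is a bounded convex set with $r(\mathcal{K})=\max_{\mathbf{x}\in\mathcal{K}}\|\mathbf{x}\|$. $N$ nodes on a connected undirected graph with neighbor sets $\mathcal{N}_i$; weight matrix $\mathbf{A}=[a_{ij}]\in\mathbb{R}_+^{N\times N}$ with $a_{ij}=0$ if $j\notin\mathcal{N}_i\cup\{i\}$; $\beta=\max(|\lambda_2(\mathbf{A})|,|\lambda_N(\mathbf{A})|)$ for eigenvalues $1=\lambda_1\ge\dots\ge\lambda_N\ge-1$. In Mono-DMFW, for each block $q\in[Q]$, $\mathbf{x}_i^{(0)}(q)=\mathbf{0}$, and for $k=1,\dots,K$ each node $i$ receives a point $\mathbf{v}_i^{(k)}(q)\in\mathcal{K}$ (output of an online linear optimization oracle) and sets $\mathbf{x}_i^{(k)}(q)=\sum_{j\in\mathcal{N}_i\cup\{i\}}a_{ij}\mathbf{x}_j^{(k-1)}(q)+\frac1K\mathbf{v}_i^{(k)}(q)$. *)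

theory Defs
  imports "HOL-Analysis.Analysis" "Jordan_Normal_Form.Char_Poly"
begin

text \<open>Eigenvalues of a real matrix (with multiplicity), sorted in non-increasing
order: lambda_1 >= lambda_2 >= ... (list index i-1 holds lambda_i).\<close>
definition eigs_desc :: "real mat \<Rightarrow> real list" where
  "eigs_desc A = rev (sorted_list_of_multiset (proots (char_poly A)))"

definition beta_mat :: "nat \<Rightarrow> real mat \<Rightarrow> real" where
  "beta_mat N A = max \<bar>eigs_desc A ! 1\<bar> \<bar>eigs_desc A ! (N - 1)\<bar>"

definition rK :: "'v::real_normed_vector set \<Rightarrow> real" where
  "rK K = (SUP x\<in>K. norm x)"

definition undirected_graph :: "nat \<Rightarrow> (nat \<Rightarrow> nat set) \<Rightarrow> bool" where
  "undirected_graph N Nb \<longleftrightarrow>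
     (\<forall>i<N. Nb i \<subseteq> {..<N} \<and> i \<notin> Nb i) \<and> (\<forall>i<N. \<forall>j<N. j \<in> Nb i \<longleftrightarrow> i \<in> Nb j)"

definition connected_graph :: "nat \<Rightarrow> (nat \<Rightarrow> nat set) \<Rightarrow> bool" where
  "connected_graph N Nb \<longleftrightarrow>
     (\<forall>i<N. \<forall>j<N. (i, j) \<in> {(a, b). a < N \<and> b \<in> Nb a}\<^sup>*)"

fun dmfw_x :: "real mat \<Rightarrow> (nat \<Rightarrow> nat set) \<Rightarrow> nat \<Rightarrow>
    (nat \<Rightarrow> nat \<Rightarrow> nat \<Rightarrow> 'v::real_vector) \<Rightarrow> nat \<Rightarrow> nat \<Rightarrow> nat \<Rightarrow> 'v" where
  "dmfw_x A Nb K v q 0 i = 0"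
| "dmfw_x A Nb K v q (Suc k) i =
     (\<Sum>j\<in>Nb i \<union> {i}. (A $$ (i, j)) *\<^sub>R dmfw_x A Nb K v q k j) + (1 / real K) *\<^sub>R v q (Suc k) i"

end

theory Submission
  imports Defs
begin

no_notation Finite_Cartesian_Product.vec.vec_nth (infixl "$" 90)



lemma proots_linear_prod: "proots (\<Prod>a\<leftarrow>as. [:- a, 1:]) = mset (as :: 'a :: idom list)"
proof (induct as)
  case Nil then show ?case by simp
next
  case (Cons a as)
  have nz: "(\<Prod>a\<leftarrow>as. [:- a, 1:]) \<noteq> 0" by (auto simp: prod_list_zero_iff)
  have "proots (\<Prod>a\<leftarrow>a#as. [:- a, 1:]) = proots [:-a,1:] + proots (\<Prod>a\<leftarrow>as. [:- a, 1:])"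
    unfolding list.map prod_list.Cons by (rule proots_mult[OF _ nz], simp)
  then show ?case using Cons by simp
qed

lemma real_sym_eig_real:
  fixes A :: "real mat"
  assumes A: "A \<in> carrier_mat n n" and sym: "\<forall>i<n. \<forall>j<n. A$$(i,j) = A$$(j,i)"
    and ev: "eigenvalue (map_mat complex_of_real A) c"
  shows "c = complex_of_real (Re c)"
proof -
  let ?Ac = "map_mat complex_of_real A"
  from ev obtain v where v: "v \<in> carrier_vec n" "v \<noteq> 0\<^sub>v n" "?Ac *\<^sub>v v = c \<cdot>\<^sub>v v"
    unfolding eigenvalue_def eigenvector_def using A by auto
  define S where "S = (\<Sum>i<n. \<Sum>j<n. cnj (vec_index v i) * complex_of_real (A$$(i,j)) * vec_index v j)"
  define T where "T = (\<Sum>i<n. cnj (vec_index v i) * vec_index v i)"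
  have row: "(\<Sum>j<n. complex_of_real (A$$(i,j)) * vec_index v j) = c * vec_index v i" if "i<n" for i
  proof -
    have "(?Ac *\<^sub>v v) $ i = (c \<cdot>\<^sub>v v) $ i" using v by simp
    then show ?thesis using that A v(1)
      by (simp add: scalar_prod_def atLeast0LessThan)
  qed
  have "S = (\<Sum>i<n. cnj (vec_index v i) * (\<Sum>j<n. complex_of_real (A$$(i,j)) * vec_index v j))"
    unfolding S_def by (simp add: sum_distrib_left mult.assoc)
  also have "\<dots> = c * T" unfolding T_def using row by (simp add: sum_distrib_left ac_simps)
  finally have S1: "S = c * T" .
  have "cnj S = (\<Sum>i<n. \<Sum>j<n. vec_index v i * complex_of_real (A$$(i,j)) * cnj (vec_index v j))"
    unfolding S_def by simp
  also have "\<dots> = (\<Sum>j<n. \<Sum>i<n. vec_index v i * complex_of_real (A$$(i,j)) * cnj (vec_index v j))"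
    by (rule sum.swap)
  also have "\<dots> = S" unfolding S_def
    by (intro sum.cong refl, insert sym, auto simp: ac_simps)
  finally have S2: "cnj S = S" .
  have T2: "cnj T = T" unfolding T_def by (simp add: ac_simps)
  have Tnz: "T \<noteq> 0"
  proof
    assume T0: "T = 0"
    have "T = complex_of_real (\<Sum>i<n. (cmod (vec_index v i))\<^sup>2)"
      unfolding T_def by (simp add: complex_norm_square mult.commute flip: of_real_power)
    with T0 have "complex_of_real (\<Sum>i<n. (cmod (vec_index v i))\<^sup>2) = 0" by simp
    then have "(\<Sum>i<n. (cmod (vec_index v i))\<^sup>2) = 0" by (simp only: of_real_eq_0_iff)
    then have "\<forall>i\<in>{..<n}. (cmod (vec_index v i))\<^sup>2 = 0" by (subst (asm) sum_nonneg_eq_0_iff) auto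
    then have "v = 0\<^sub>v n" using v(1) by (intro eq_vecI) auto
    with v(2) show False by simp
  qed
  from S1 S2 T2 have "cnj c * T = c * T" by (metis complex_cnj_mult)
  with Tnz have "cnj c = c" by simp
  then show ?thesis by (metis Reals_cnj_iff complex_is_Real_iff of_real_Re)
qed


lemma real_sym_split:
  fixes A :: "real mat"
  assumes A: "A \<in> carrier_mat n n" and sym: "\<forall>i<n. \<forall>j<n. A$$(i,j) = A$$(j,i)"
  shows "\<exists>as. char_poly A = (\<Prod>a\<leftarrow>as. [:- a, 1:]) \<and> length as = n"
proof -
  interpret m: map_poly_inj_comm_ring_hom "complex_of_real" ..
  let ?Ac = "map_mat complex_of_real A"
  have Ac: "?Ac \<in> carrier_mat n n" using A by simp
  have cpc: "char_poly ?Ac = map_poly complex_of_real (char_poly A)"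
    by (rule of_real_hom.char_poly_hom[OF A])
  obtain cs where cs: "char_poly ?Ac = (\<Prod>c\<leftarrow>cs. [:- c, 1:])" "length cs = n"
    using char_poly_factorized[OF Ac] by blast
  have re: "c = complex_of_real (Re c)" if c: "c \<in> set cs" for c
  proof -
    have "poly (char_poly ?Ac) c = 0" unfolding cs(1) by (rule linear_poly_root[OF c])
    then have "eigenvalue ?Ac c" using eigenvalue_root_char_poly[OF Ac] by simp
    then show ?thesis by (rule real_sym_eig_real[OF A sym])
  qed
  have "map_poly complex_of_real (\<Prod>a\<leftarrow>map Re cs. [:- a, 1:]) = (\<Prod>c\<leftarrow>cs. [:- c, 1:])"
    using re
  proof (induct cs)
    case Nil then show ?case by simp
  next
    case (Cons c cs)
    have "map_poly complex_of_real (\<Prod>a\<leftarrow>map Re (c#cs). [:- a, 1:])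
       = map_poly complex_of_real [:- Re c, 1:] * map_poly complex_of_real (\<Prod>a\<leftarrow>map Re cs. [:- a, 1:])"
      unfolding list.map prod_list.Cons by (rule m.hom_mult)
    also have "map_poly complex_of_real [:- Re c, 1:] = [:- c, 1:]"
      using Cons(2)[of c] by simp
    also have "map_poly complex_of_real (\<Prod>a\<leftarrow>map Re cs. [:- a, 1:]) = (\<Prod>c\<leftarrow>cs. [:- c, 1:])"
      using Cons by simp
    finally show ?case by simp
  qed
  with cpc cs(1) have "char_poly A = (\<Prod>a\<leftarrow>map Re cs. [:- a, 1:])" by (simp add: m.eq_iff)
  then show ?thesis using cs(2) by (intro exI[of _ "map Re cs"]) simp
qed





lemma double_root:
  fixes A :: "real mat"
  assumes A: "A \<in> carrier_mat n n"
    and p: "p \<in> carrier_vec n" "A *\<^sub>v p = p"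
    and u: "u \<in> carrier_vec n" "A *\<^sub>v u = u"
    and ab: "a < n" "b < n" "a \<noteq> b"
    and det2: "p$a * u$b - p$b * u$a \<noteq> 0"
  shows "2 \<le> order 1 (char_poly A)"
proof -
  define P where "P = mat n n (\<lambda>(i,j). if j = a then p$i else if j = b then u$i else if i = j then 1 else (0::real))"
  have P: "P \<in> carrier_mat n n" by (simp add: P_def)
  have colPa: "col P a = p" by (rule eq_vecI) (use p ab in \<open>auto simp: P_def\<close>)
  have colPb: "col P b = u" by (rule eq_vecI) (use u ab in \<open>auto simp: P_def\<close>)
  have detP: "det P \<noteq> 0"
  proof
    assume "det P = 0"
    then obtain v where v: "v \<in> carrier_vec n" "v \<noteq> 0\<^sub>v n" "P *\<^sub>v v = 0\<^sub>v n"
      using det_0_iff_vec_prod_zero[OF P] by auto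
    have comp: "(P *\<^sub>v v)$i = v$a * p$i + v$b * u$i + (if i \<noteq> a \<and> i \<noteq> b then v$i else 0)" if i: "i<n" for i
    proof -
      have "(P *\<^sub>v v)$i = (\<Sum>j\<in>{0..<n}. P$$(i,j) * v$j)"
        using i P v(1) by (simp add: mult_mat_vec_def scalar_prod_def)
      also have "\<dots> = (\<Sum>j\<in>{0..<n}. (if j = a then v$a * p$i else 0) + (if j = b then v$b*u$i else 0)
           + (if j = i then (if i\<noteq>a \<and> i\<noteq>b then v$i else 0) else 0))"
        by (rule sum.cong[OF refl]) (use i ab in \<open>auto simp: P_def\<close>)
      also have "\<dots> = v$a * p$i + v$b * u$i + (if i \<noteq> a \<and> i \<noteq> b then v$i else 0)"
        using i ab by (simp add: sum.distrib)
      finally show ?thesis .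
    qed
    have e1: "v$a * p$a + v$b * u$a = 0" using comp[OF ab(1)] v(3) ab by simp
    have e2: "v$a * p$b + v$b * u$b = 0" using comp[OF ab(2)] v(3) ab by simp
    have "v$a * (p$a * u$b - p$b * u$a) = u$b * (v$a * p$a + v$b * u$a) - u$a * (v$a * p$b + v$b * u$b)"
      by (simp add: algebra_simps)
    with e1 e2 det2 have va: "v$a = 0" by simp
    have "v$b * (p$a * u$b - p$b * u$a) = p$a * (v$a * p$b + v$b * u$b) - p$b * (v$a * p$a + v$b * u$a)"
      by (simp add: algebra_simps)
    with e1 e2 det2 have vb: "v$b = 0" by simp
    have "v = 0\<^sub>v n"
    proof (rule eq_vecI)
      fix i assume "i < dim_vec (0\<^sub>v n :: real vec)"
      then have i: "i < n" by simp
      show "v$i = 0\<^sub>v n $ i"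
        using comp[OF i] v(3) va vb i by (auto split: if_splits)
    qed (use v in auto)
    with v(2) show False by simp
  qed
  obtain Q where Q: "Q \<in> carrier_mat n n" "P * Q = 1\<^sub>m n" "Q * P = 1\<^sub>m n"
    using det_non_zero_imp_unit[OF P detP, of undefined] unfolding Units_def ring_mat_def by auto
  define B where "B = A - 1\<^sub>m n"
  have B: "B \<in> carrier_mat n n" unfolding B_def by (rule minus_carrier_mat[OF one_carrier_mat])
  define C where "C = Q * B * P"
  have C: "C \<in> carrier_mat n n" using Q B P by (simp add: C_def)
  have "P * C * Q = (P * Q) * B * (P * Q)"
    unfolding C_def using P Q(1) B by (simp add: assoc_mult_mat[of _ n n _ n _ n])
  also have "\<dots> = B" using Q B by simp
  finally have PCQ: "B = P * C * Q" by simp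
  have sim: "similar_mat B C" unfolding similar_mat_def similar_mat_wit_def Let_def
    using B C P Q PCQ by (intro exI[of _ P] exI[of _ Q]) auto
  have Bp: "B *\<^sub>v p = 0\<^sub>v n" unfolding B_def using A p
    by (simp add: minus_mult_distrib_mat_vec)
  have Bu: "B *\<^sub>v u = 0\<^sub>v n" unfolding B_def using A u
    by (simp add: minus_mult_distrib_mat_vec)
  have colC: "col C j = Q *\<^sub>v (B *\<^sub>v col P j)" if "j < n" for j
  proof -
    have "col C j = (Q * B) *\<^sub>v col P j" unfolding C_def
      by (rule col_mult2[OF _ P that, of _ n]) (use Q B in simp)
    also have "\<dots> = Q *\<^sub>v (B *\<^sub>v col P j)" using Q B P that
      by (intro assoc_mult_mat_vec) auto
    finally show ?thesis .
  qed
  have Ca: "C $$ (i,a) = 0" if "i < n" for i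
  proof -
    have "C $$ (i,a) = col C a $ i" using C that ab by simp
    also have "\<dots> = 0" using colC[OF ab(1)] colPa Bp Q that by simp
    finally show ?thesis .
  qed
  have Cb: "C $$ (i,b) = 0" if "i < n" for i
  proof -
    have "C $$ (i,b) = col C b $ i" using C that ab by simp
    also have "\<dots> = 0" using colC[OF ab(2)] colPb Bu Q that by simp
    finally show ?thesis .
  qed
  have cp1: "char_poly C = monom 1 1 * char_poly (mat_delete C a a)"
    by (rule char_poly_0_column[OF _ C ab(1)]) (rule Ca)
  define D where "D = mat_delete C a a"
  define b' where "b' = (if b < a then b else b - 1)"
  have D: "D \<in> carrier_mat (n-1) (n-1)" unfolding D_def using C by (rule mat_delete_carrier)
  have b': "b' < n - 1" using ab unfolding b'_def by auto
  have Db: "D $$ (i,b') = 0" if "i < n - 1" for i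
  proof -
    have "D $$ (i,b') = C $$ (if i < a then i else Suc i, if b' < a then b' else Suc b')"
      unfolding D_def mat_delete_def using that b' C by simp
    also have "(if b' < a then b' else Suc b') = b" using ab unfolding b'_def by auto
    finally show ?thesis using Cb that by auto
  qed
  have cp2: "char_poly D = monom 1 1 * char_poly (mat_delete D b' b')"
    by (rule char_poly_0_column[OF _ D b']) (rule Db)
  define r where "r = char_poly (mat_delete D b' b')"
  have cpB: "char_poly B = [:0,1:] * ([:0,1:] * r)"
    using char_poly_similar[OF sim] cp1 cp2 unfolding D_def r_def by (simp add: x_as_monom)
  have "poly (char_poly A) t = poly (char_poly B) (t - 1)" for t
  proof -
    have "char_matrix B (t - 1) = char_matrix A t"
      unfolding char_matrix_def B_def using A by (intro eq_matI) auto
    then show ?thesis using char_poly_matrix[OF A, of t] char_poly_matrix[OF B, of "t-1"] by simp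
  qed
  then have "char_poly A = pcompose (char_poly B) [:-1,1:]"
    unfolding poly_eq_poly_eq_iff[symmetric] by (auto simp: poly_pcompose)
  also have "\<dots> = [:-1,1:] * ([:-1,1:] * pcompose r [:-1,1:])"
    unfolding cpB by (simp add: pcompose_mult pcompose_pCons)
  finally have "char_poly A = [:-1,1:]^2 * pcompose r [:-1,1:]" by (simp only: power2_eq_square mult.assoc)
  then have "[:-1,1:]^2 dvd char_poly A" by (metis dvd_triv_left)
  moreover have "char_poly A \<noteq> 0" using degree_monic_char_poly[OF A] by auto
  ultimately show ?thesis by (simp add: order_divides)
qed





lemma eigs_desc_props:
  fixes A :: "real mat"
  assumes A: "A \<in> carrier_mat n n" and sym: "\<forall>i<n. \<forall>j<n. A$$(i,j) = A$$(j,i)"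
  shows "length (eigs_desc A) = n" "sorted (rev (eigs_desc A))"
    "mset (eigs_desc A) = proots (char_poly A)"
proof -
  obtain as where as: "char_poly A = (\<Prod>a\<leftarrow>as. [:- a, 1:])" "length as = n"
    using real_sym_split[OF A sym] by blast
  show m: "mset (eigs_desc A) = proots (char_poly A)" unfolding eigs_desc_def by simp
  have "length (eigs_desc A) = size (mset (eigs_desc A))" by simp
  also have "\<dots> = n" unfolding m as(1) proots_linear_prod using as(2) by simp
  finally show "length (eigs_desc A) = n" .
  show "sorted (rev (eigs_desc A))" unfolding eigs_desc_def by simp
qed

lemma eig_in_list:
  fixes A :: "real mat"
  assumes A: "A \<in> carrier_mat n n" and sym: "\<forall>i<n. \<forall>j<n. A$$(i,j) = A$$(j,i)"
    and u: "u \<in> carrier_vec n" "u \<noteq> 0\<^sub>v n" "A *\<^sub>v u = \<mu> \<cdot>\<^sub>v u"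
  shows "\<mu> \<in> set (eigs_desc A)"
proof -
  have "eigenvalue A \<mu>" unfolding eigenvalue_def eigenvector_def using A u by auto
  then have "poly (char_poly A) \<mu> = 0" using eigenvalue_root_char_poly[OF A] by simp
  moreover have "char_poly A \<noteq> 0" using degree_monic_char_poly[OF A] by auto
  ultimately have "\<mu> \<in># proots (char_poly A)" by simp
  then show ?thesis using eigs_desc_props(3)[OF A sym] by (metis set_mset_mset)
qed

lemma eig_bound:
  fixes A :: "real mat"
  assumes A: "A \<in> carrier_mat n n" and sym: "\<forall>i<n. \<forall>j<n. A$$(i,j) = A$$(j,i)"
    and n: "n \<ge> 1"
    and ones: "A *\<^sub>v vec n (\<lambda>_. 1) = vec n (\<lambda>_. 1)"
    and beta: "beta_mat n A < 1"
    and u: "u \<in> carrier_vec n" "u \<noteq> 0\<^sub>v n" "A *\<^sub>v u = \<mu> \<cdot>\<^sub>v u" "(\<Sum>i<n. u$i) = 0"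
  shows "\<bar>\<mu>\<bar> \<le> beta_mat n A"
proof -
  define L where "L = eigs_desc A"
  have len: "length L = n" and srt: "sorted (rev L)" and ms: "mset L = proots (char_poly A)"
    using eigs_desc_props[OF A sym] unfolding L_def by auto
  have mono: "L!j \<le> L!i" if "i \<le> j" "j < n" for i j
    using sorted_rev_nth_mono[OF srt that(1)] that(2) len by simp
  have bdef: "beta_mat n A = max \<bar>L!1\<bar> \<bar>L!(n-1)\<bar>" unfolding beta_mat_def L_def ..
  have L1: "L!1 < 1" using beta bdef by auto
  have "\<mu> \<in> set L" unfolding L_def by (rule eig_in_list[OF A sym u(1-3)])
  then obtain j where j: "j < n" "L!j = \<mu>" using len by (auto simp: in_set_conv_nth)
  have one_ne: "vec n (\<lambda>_. 1::real) \<noteq> 0\<^sub>v n"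
  proof
    assume "vec n (\<lambda>_. 1::real) = 0\<^sub>v n"
    then have "vec n (\<lambda>_. 1::real) $ 0 = 0\<^sub>v n $ 0" by simp
    with n show False by simp
  qed
  have "1 \<in> set L" unfolding L_def
    by (rule eig_in_list[OF A sym _ one_ne]) (use ones in auto)
  then obtain i where i: "i < n" "L!i = 1" using len by (auto simp: in_set_conv_nth)
  show ?thesis
  proof (cases "j \<ge> 1")
    case True
    have "L!(n-1) \<le> \<mu>" using mono[of j "n-1"] j by simp
    moreover have "\<mu> \<le> L!1" using mono[of 1 j] j True by simp
    ultimately show ?thesis unfolding bdef by linarith
  next
    case False
    then have j0: "j = 0" by simp
    have i0: "i = 0"
    proof (rule ccontr)
      assume "i \<noteq> 0"
      then have "1 \<le> L!1" using mono[of 1 i] i by simp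
      with L1 show False by simp
    qed
    have mu1: "\<mu> = 1" using i j i0 j0 by simp
    obtain b where b: "b < n" "u$b \<noteq> 0"
    proof -
      have "\<exists>b<n. u$b \<noteq> 0"
      proof (rule ccontr)
        assume "\<not> ?thesis"
        then have "u = 0\<^sub>v n" using u(1) by (intro eq_vecI) auto
        with u(2) show False by simp
      qed
      then show ?thesis using that by blast
    qed
    obtain a where a: "a < n" "u$a \<noteq> u$b"
    proof -
      have "\<exists>a<n. u$a \<noteq> u$b"
      proof (rule ccontr)
        assume "\<not> ?thesis"
        then have "(\<Sum>i<n. u$i) = (\<Sum>i<n. u$b)" by (intro sum.cong) auto
        then have "real n * u$b = 0" using u(4) by simp
        with n b show False by simp
      qed
      then show ?thesis using that by blast
    qed
    have ab: "a \<noteq> b" using a by auto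
    have "2 \<le> order 1 (char_poly A)"
      by (rule double_root[OF A _ ones u(1) _ a(1) b(1) ab]) (use u mu1 a b in auto)
    moreover have "char_poly A \<noteq> 0" using degree_monic_char_poly[OF A] by auto
    ultimately have c2: "2 \<le> count (mset L) 1" unfolding ms by (simp add: count_proots)
    have Lc: "L = 1 # tl L" using i i0 len n by (cases L) auto
    have "count (mset L) 1 = Suc (count (mset (tl L)) 1)" by (subst Lc) simp
    with c2 have "1 \<in> set (tl L)" by (simp add: count_mset_0_iff[symmetric]) 
    then obtain k where k: "k < length (tl L)" "tl L ! k = 1" by (auto simp: in_set_conv_nth)
    then have "L ! Suc k = 1" "Suc k < n" using len by (auto simp: nth_tl)
    then have "1 \<le> L!1" using mono[of 1 "Suc k"] by simp
    with L1 show ?thesis by simp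
  qed
qed





definition mv :: "real mat \<Rightarrow> nat \<Rightarrow> (nat \<Rightarrow> real) \<Rightarrow> nat \<Rightarrow> real" where
  "mv A N y = (\<lambda>i. \<Sum>j<N. A$$(i,j) * y j)"
definition nsq :: "nat \<Rightarrow> (nat \<Rightarrow> real) \<Rightarrow> real" where
  "nsq N y = (\<Sum>i<N. (y i)\<^sup>2)"
definition ipr :: "nat \<Rightarrow> (nat \<Rightarrow> real) \<Rightarrow> (nat \<Rightarrow> real) \<Rightarrow> real" where
  "ipr N y z = (\<Sum>i<N. y i * z i)"

lemma nsq_nonneg: "nsq N y \<ge> 0" unfolding nsq_def by (simp add: sum_nonneg)

lemma nsq_zero: "nsq N y = 0 \<Longrightarrow> i < N \<Longrightarrow> y i = 0"
  unfolding nsq_def by (subst (asm) sum_nonneg_eq_0_iff) auto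

lemma mv_zero: "(\<And>i. i < N \<Longrightarrow> y i = 0) \<Longrightarrow> mv A N y i = 0"
  unfolding mv_def by simp

lemma mv_scale: "mv A N (\<lambda>i. c * y i) i = c * mv A N y i"
  unfolding mv_def by (simp add: sum_distrib_left ac_simps)

lemma nsq_scale: "nsq N (\<lambda>i. c * y i) = c\<^sup>2 * nsq N y"
  unfolding nsq_def by (simp add: sum_distrib_left power_mult_distrib)

lemma mv_add: "mv A N (\<lambda>i. y i + z i) i = mv A N y i + mv A N z i"
  unfolding mv_def by (simp add: sum.distrib algebra_simps)

lemma mv_cong: "(\<And>i. i < N \<Longrightarrow> y i = z i) \<Longrightarrow> mv A N y k = mv A N z k"
  unfolding mv_def by simp

lemma nsq_cong: "(\<And>i. i < N \<Longrightarrow> y i = z i) \<Longrightarrow> nsq N y = nsq N z"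
  unfolding nsq_def by simp

lemma mv_sum:
  assumes cols: "\<forall>j<N. (\<Sum>i<N. A $$ (i, j)) = 1"
  shows "(\<Sum>i<N. mv A N y i) = (\<Sum>j<N. y j)"
proof -
  have "(\<Sum>i<N. mv A N y i) = (\<Sum>j<N. (\<Sum>i<N. A$$(i,j)) * y j)"
    unfolding mv_def by (subst sum.swap) (simp add: sum_distrib_right)
  also have "\<dots> = (\<Sum>j<N. y j)" using cols by simp
  finally show ?thesis .
qed

lemma mv_sym:
  assumes sym: "\<forall>i<N. \<forall>j<N. A$$(i,j) = A$$(j,i)"
  shows "ipr N (mv A N y) z = ipr N y (mv A N z)"
proof -
  have "ipr N (mv A N y) z = (\<Sum>i<N. \<Sum>j<N. A$$(i,j) * y j * z i)"
    unfolding ipr_def mv_def by (simp add: sum_distrib_right)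
  also have "\<dots> = (\<Sum>j<N. \<Sum>i<N. A$$(i,j) * y j * z i)" by (rule sum.swap)
  also have "\<dots> = ipr N y (mv A N z)"
    unfolding ipr_def mv_def using sym by (simp add: sum_distrib_left ac_simps)
  finally show ?thesis .
qed

lemma jensen_row:
  fixes w y :: "nat \<Rightarrow> real"
  assumes nn: "\<forall>j<N. w j \<ge> 0" and s1: "(\<Sum>j<N. w j) = 1"
  shows "(\<Sum>j<N. w j * y j)\<^sup>2 \<le> (\<Sum>j<N. w j * (y j)\<^sup>2)"
proof -
  define m where "m = (\<Sum>j<N. w j * y j)"
  have "0 \<le> (\<Sum>j<N. w j * (y j - m)\<^sup>2)" using nn by (intro sum_nonneg) auto
  also have "\<dots> = (\<Sum>j<N. w j * (y j)\<^sup>2) - 2 * m * (\<Sum>j<N. w j * y j) + m\<^sup>2 * (\<Sum>j<N. w j)"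
    by (simp add: power2_diff algebra_simps sum.distrib sum_subtractf sum_distrib_left sum_distrib_right)
  also have "\<dots> = (\<Sum>j<N. w j * (y j)\<^sup>2) - m\<^sup>2" using s1 unfolding m_def by (simp add: power2_eq_square)
  finally show ?thesis unfolding m_def by simp
qed

lemma mv_nsq_le:
  assumes nn: "\<forall>i<N. \<forall>j<N. A $$ (i, j) \<ge> 0"
    and rows: "\<forall>i<N. (\<Sum>j<N. A $$ (i, j)) = 1"
    and cols: "\<forall>j<N. (\<Sum>i<N. A $$ (i, j)) = 1"
  shows "nsq N (mv A N y) \<le> nsq N y"
proof -
  have "nsq N (mv A N y) \<le> (\<Sum>i<N. \<Sum>j<N. A$$(i,j) * (y j)\<^sup>2)"
    unfolding nsq_def mv_def by (intro sum_mono jensen_row) (use nn rows in auto)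
  also have "\<dots> = (\<Sum>j<N. (\<Sum>i<N. A$$(i,j)) * (y j)\<^sup>2)"
    by (subst sum.swap) (simp add: sum_distrib_right)
  also have "\<dots> = nsq N y" using cols unfolding nsq_def by simp
  finally show ?thesis .
qed





lemma mult_vec_mv:
  assumes A: "A \<in> carrier_mat N N" and i: "i < N"
  shows "(A *\<^sub>v vec N y) $ i = mv A N y i"
  using A i by (simp add: mult_mat_vec_def scalar_prod_def mv_def atLeast0LessThan)

lemma nsq_expand:
  "nsq N (\<lambda>i. w i - s * y i) = nsq N w - 2 * s * ipr N w y + s\<^sup>2 * nsq N y"
  unfolding nsq_def ipr_def
  by (simp add: power2_diff power_mult_distrib sum.distrib sum_subtractf sum_distrib_left algebra_simps)

lemma normalize_vec:
  assumes q: "nsq N y > 0" and yW: "(\<Sum>i<N. y i) = 0"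
  shows "(\<Sum>i<N. (1 / sqrt (nsq N y)) * y i) = 0" "nsq N (\<lambda>i. (1 / sqrt (nsq N y)) * y i) = 1"
proof -
  have "(\<Sum>i<N. (1 / sqrt (nsq N y)) * y i) = (1 / sqrt (nsq N y)) * (\<Sum>i<N. y i)"
    by (simp only: sum_distrib_left)
  then show "(\<Sum>i<N. (1 / sqrt (nsq N y)) * y i) = 0" using yW by simp
  have "nsq N (\<lambda>i. (1 / sqrt (nsq N y)) * y i) = (1 / sqrt (nsq N y))\<^sup>2 * nsq N y"
    by (simp only: nsq_scale)
  then show "nsq N (\<lambda>i. (1 / sqrt (nsq N y)) * y i) = 1" using q by (simp add: power_divide)
qed

lemma contraction:
  fixes A :: "real mat"
  assumes A: "A \<in> carrier_mat N N" and N: "N \<ge> 1"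
    and sym: "\<forall>i<N. \<forall>j<N. A$$(i,j) = A$$(j,i)"
    and nn: "\<forall>i<N. \<forall>j<N. A $$ (i, j) \<ge> 0"
    and rows: "\<forall>i<N. (\<Sum>j<N. A $$ (i, j)) = 1"
    and cols: "\<forall>j<N. (\<Sum>i<N. A $$ (i, j)) = 1"
    and beta: "beta_mat N A < 1"
    and y0: "(\<Sum>i<N. y0 i) = 0"
  shows "nsq N (mv A N y0) \<le> (beta_mat N A)\<^sup>2 * nsq N y0"
proof (rule ccontr)
  define \<beta> where "\<beta> = beta_mat N A"
  define F where "F = (\<lambda>y. nsq N (mv A N y))"
  assume "\<not> ?thesis"
  then have gt0: "F y0 > \<beta>\<^sup>2 * nsq N y0" unfolding F_def \<beta>_def by simp
  have bnn: "\<beta> \<ge> 0" unfolding \<beta>_def beta_mat_def by simp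
  have Fle: "F y \<le> nsq N y" for y unfolding F_def by (rule mv_nsq_le[OF nn rows cols])
  have Fnn: "F y \<ge> 0" for y unfolding F_def by (rule nsq_nonneg)
  have F0: "F y = 0" if "nsq N y = 0" for y
  proof -
    have "mv A N y i = 0" for i by (rule mv_zero) (use nsq_zero[OF that] in auto)
    then show ?thesis unfolding F_def nsq_def by simp
  qed
  have Fscale: "F (\<lambda>i. c * y i) = c\<^sup>2 * F y" for c y
  proof -
    have "mv A N (\<lambda>i. c * y i) = (\<lambda>i. c * mv A N y i)" by (rule ext) (rule mv_scale)
    then show ?thesis unfolding F_def by (simp add: nsq_scale)
  qed
  define S where "S = {F y | y. (\<Sum>i<N. y i) = 0 \<and> nsq N y = 1}"
  define s where "s = Sup S"
  have q0: "nsq N y0 > 0"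
  proof -
    have "nsq N y0 \<noteq> 0" using F0[of y0] gt0 by auto
    then show ?thesis using nsq_nonneg[of N y0] by simp
  qed
  define y1 where "y1 = (\<lambda>i. (1 / sqrt (nsq N y0)) * y0 i)"
  have y1: "(\<Sum>i<N. y1 i) = 0" "nsq N y1 = 1"
    unfolding y1_def using normalize_vec[OF q0 y0] by simp_all
  have Fy1: "F y1 = F y0 / nsq N y0"
    unfolding y1_def Fscale using q0 by (simp add: power_divide)
  have Fy1b: "F y1 > \<beta>\<^sup>2" using gt0 q0 Fy1 by (simp add: pos_less_divide_eq)
  have Sne: "S \<noteq> {}" using y1 unfolding S_def by blast
  have Sbdd: "bdd_above S" unfolding bdd_above_def
  proof (intro exI[of _ 1] ballI)
    fix x assume "x \<in> S"
    then obtain y where "x = F y" "nsq N y = 1" unfolding S_def by blast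
    then show "x \<le> 1" using Fle[of y] by simp
  qed
  have sge: "F y \<le> s" if "(\<Sum>i<N. y i) = 0" "nsq N y = 1" for y
    unfolding s_def by (rule cSup_upper[OF _ Sbdd]) (use that in \<open>auto simp: S_def\<close>)
  have sgt: "s > \<beta>\<^sup>2" using sge[OF y1] Fy1b by simp
  have spos: "s > 0" using sgt bnn by (smt (verit) zero_le_power2)
  have Fs: "F y \<le> s * nsq N y" if yW: "(\<Sum>i<N. y i) = 0" for y
  proof (cases "nsq N y = 0")
    case True then show ?thesis using F0 by simp
  next
    case False
    then have q: "nsq N y > 0" using nsq_nonneg[of N y] by simp
    define z where "z = (\<lambda>i. (1 / sqrt (nsq N y)) * y i)"
    have z: "(\<Sum>i<N. z i) = 0" "nsq N z = 1"
      unfolding z_def using normalize_vec[OF q yW] by simp_all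
    have "F z = F y / nsq N y" unfolding z_def Fscale using q by (simp add: power_divide)
    with sge[OF z] q show ?thesis by (simp add: divide_le_eq mult.commute)
  qed
  have approx: "nsq N (\<lambda>i. mv A N (mv A N y) i - s * y i) \<le> s * (s - F y)"
    if yW: "(\<Sum>i<N. y i) = 0" and y1: "nsq N y = 1" for y
  proof -
    have AyW: "(\<Sum>i<N. mv A N y i) = 0" using mv_sum[OF cols] yW by simp
    have "nsq N (mv A N (mv A N y)) \<le> s * F y" using Fs[OF AyW] unfolding F_def .
    moreover have "ipr N (mv A N (mv A N y)) y = F y"
      unfolding F_def using mv_sym[OF sym, of "mv A N y" y] by (simp add: nsq_def ipr_def power2_eq_square)
    ultimately show ?thesis unfolding nsq_expand using y1 by (simp add: algebra_simps power2_eq_square)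
  qed
  define M where "M = mat N N (\<lambda>(i,j). (\<Sum>k<N. A$$(i,k) * A$$(k,j)) - (if i = j then s else 0) + s / real N)"
  have M: "M \<in> carrier_mat N N" unfolding M_def by simp
  have Mv: "(M *\<^sub>v vec N y) $ i = mv A N (mv A N y) i - s * y i + s / real N * (\<Sum>j<N. y j)"
    if i: "i < N" for i y
  proof -
    have "(M *\<^sub>v vec N y) $ i = (\<Sum>j<N. ((\<Sum>k<N. A$$(i,k) * A$$(k,j)) - (if i = j then s else 0) + s / real N) * y j)"
      using i M by (simp add: mult_mat_vec_def scalar_prod_def atLeast0LessThan M_def)
    also have "\<dots> = (\<Sum>j<N. (\<Sum>k<N. A$$(i,k) * A$$(k,j)) * y j) - (\<Sum>j<N. (if i = j then s else 0) * y j)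
        + (\<Sum>j<N. s / real N * y j)"
      by (simp add: algebra_simps sum.distrib sum_subtractf)
    also have "(\<Sum>j<N. (\<Sum>k<N. A$$(i,k) * A$$(k,j)) * y j) = mv A N (mv A N y) i"
      unfolding mv_def by (simp add: sum_distrib_left sum_distrib_right ac_simps) (rule sum.swap)
    also have "(\<Sum>j<N. (if i = j then s else 0) * y j) = (\<Sum>j<N. if j = i then s * y i else 0)"
      by (rule sum.cong) auto
    also have "\<dots> = s * y i" using i by simp
    finally show ?thesis by (simp add: sum_distrib_left)
  qed
  have detM: "det M = 0"
  proof (rule ccontr)
    assume "det M \<noteq> 0"
    then obtain R where R: "R \<in> carrier_mat N N" "R * M = 1\<^sub>m N"
      using det_non_zero_imp_unit[OF M, of undefined] unfolding Units_def ring_mat_def by auto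
    define c where "c = (\<Sum>i<N. \<Sum>j<N. (R$$(i,j))\<^sup>2)"
    have cnn: "c \<ge> 0" unfolding c_def by (intro sum_nonneg) auto
    have bound: "nsq N y \<le> c * nsq N (\<lambda>i. (M *\<^sub>v vec N y) $ i)" for y
    proof -
      have yi: "y i = (\<Sum>j<N. R$$(i,j) * (M *\<^sub>v vec N y) $ j)" if i: "i < N" for i
      proof -
        have "vec N y = (R * M) *\<^sub>v vec N y" using R by simp
        also have "\<dots> = R *\<^sub>v (M *\<^sub>v vec N y)" using R M by (intro assoc_mult_mat_vec) auto
        finally have "vec N y $ i = (R *\<^sub>v (M *\<^sub>v vec N y)) $ i" by simp
        then show ?thesis using i R M by (simp add: mult_mat_vec_def scalar_prod_def atLeast0LessThan)
      qed
      have "nsq N y \<le> (\<Sum>i<N. (\<Sum>j<N. (R$$(i,j))\<^sup>2) * nsq N (\<lambda>i. (M *\<^sub>v vec N y) $ i))"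
        unfolding nsq_def
      proof (rule sum_mono)
        fix i assume "i \<in> {..<N}"
        then have "(y i)\<^sup>2 = (\<Sum>j<N. R$$(i,j) * (M *\<^sub>v vec N y) $ j)\<^sup>2" using yi by simp
        also have "\<dots> \<le> (\<Sum>j<N. (R$$(i,j))\<^sup>2) * (\<Sum>j<N. ((M *\<^sub>v vec N y) $ j)\<^sup>2)"
          by (rule Cauchy_Schwarz_ineq_sum)
        finally show "(y i)\<^sup>2 \<le> (\<Sum>j<N. (R$$(i,j))\<^sup>2) * (\<Sum>j<N. ((M *\<^sub>v vec N y) $ j)\<^sup>2)" .
      qed
      also have "\<dots> = c * nsq N (\<lambda>i. (M *\<^sub>v vec N y) $ i)" unfolding c_def by (simp add: sum_distrib_right)
      finally show ?thesis .
    qed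
    define \<epsilon> where "\<epsilon> = 1 / (2 * (c + 1) * s)"
    have eps: "\<epsilon> > 0" unfolding \<epsilon>_def using spos cnn by simp
    have "s - \<epsilon> < Sup S" unfolding s_def[symmetric] using eps by simp
    then obtain x where "x \<in> S" "s - \<epsilon> < x" using less_cSup_iff[OF Sne Sbdd] by blast
    then obtain y where yW: "(\<Sum>i<N. y i) = 0" and yn: "nsq N y = 1" and Fy: "s - \<epsilon> < F y"
      unfolding S_def by blast
    have "nsq N (\<lambda>i. (M *\<^sub>v vec N y) $ i) = nsq N (\<lambda>i. mv A N (mv A N y) i - s * y i)"
      by (rule nsq_cong) (simp add: Mv yW)
    also have "\<dots> \<le> s * (s - F y)" by (rule approx[OF yW yn])
    finally have "1 \<le> c * (s * (s - F y))" using bound[of y] yn cnn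
      by (smt (verit) mult_left_mono)
    also have "\<dots> \<le> c * (s * \<epsilon>)" using Fy spos cnn by (intro mult_left_mono) auto
    also have "\<dots> = c / (2 * (c + 1))" unfolding \<epsilon>_def using spos cnn by (simp add: divide_simps)
    also have "\<dots> < 1" using cnn by (simp add: field_simps)
    finally show False by simp
  qed
  obtain v where v: "v \<in> carrier_vec N" "v \<noteq> 0\<^sub>v N" "M *\<^sub>v v = 0\<^sub>v N"
    using det_0_iff_vec_prod_zero[OF M] detM by auto
  define z where "z = (\<lambda>i. v $ i)"
  have vz: "v = vec N z" unfolding z_def using v(1) by (intro eq_vecI) auto
  have Mz: "mv A N (mv A N z) i - s * z i + s / real N * (\<Sum>j<N. z j) = 0" if "i < N" for i
    using Mv[OF that, of z] v(3) that unfolding vz[symmetric] by simp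
  have "(\<Sum>i<N. mv A N (mv A N z) i - s * z i + s / real N * (\<Sum>j<N. z j)) = (\<Sum>j<N. z j)"
    using N by (simp add: sum.distrib sum_subtractf mv_sum[OF cols] sum_distrib_left[symmetric])
  then have zW: "(\<Sum>j<N. z j) = 0" using Mz by simp
  have A2z: "mv A N (mv A N z) i = s * z i" if "i < N" for i using Mz[OF that] zW by simp
  have zne: "\<exists>i<N. z i \<noteq> 0"
  proof (rule ccontr)
    assume "\<not> ?thesis"
    then have "v = 0\<^sub>v N" unfolding vz by (intro eq_vecI) auto
    with v(2) show False by simp
  qed
  define \<sigma> where "\<sigma> = sqrt s"
  have \<sigma>2: "\<sigma> * \<sigma> = s" unfolding \<sigma>_def using spos by simp
  have \<sigma>gt: "\<sigma> > \<beta>" unfolding \<sigma>_def using sgt bnn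
    by (metis real_less_rsqrt)
  have ones: "A *\<^sub>v vec N (\<lambda>_. 1) = vec N (\<lambda>_. 1)"
    by (rule eq_vecI) (use A rows in \<open>auto simp: mult_mat_vec_def scalar_prod_def atLeast0LessThan\<close>)
  have eig: "\<exists>\<mu> u. (\<Sum>i<N. u i) = 0 \<and> (\<exists>i<N. u i \<noteq> 0) \<and> (\<forall>i<N. mv A N u i = \<mu> * u i) \<and> \<bar>\<mu>\<bar> = \<sigma>"
  proof (cases "\<forall>i<N. mv A N z i + \<sigma> * z i = 0")
    case True
    then show ?thesis using zW zne \<sigma>gt bnn
      by (intro exI[of _ "-\<sigma>"] exI[of _ z]) (auto simp: algebra_simps)
  next
    case False
    define w where "w = (\<lambda>i. mv A N z i + \<sigma> * z i)"
    have "(\<Sum>i<N. w i) = 0" unfolding w_def using zW mv_sum[OF cols, of z]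
      by (simp add: sum.distrib sum_distrib_left[symmetric])
    moreover have "\<forall>i<N. mv A N w i = \<sigma> * w i"
    proof (intro allI impI)
      fix i assume i: "i < N"
      have "mv A N w i = mv A N (mv A N z) i + \<sigma> * mv A N z i"
        unfolding w_def by (simp add: mv_add mv_scale)
      also have "\<dots> = \<sigma> * w i" using A2z[OF i] \<sigma>2 unfolding w_def by (simp add: algebra_simps)
      finally show "mv A N w i = \<sigma> * w i" .
    qed
    moreover have "\<exists>i<N. w i \<noteq> 0" using False unfolding w_def by auto
    ultimately show ?thesis using \<sigma>gt bnn
      by (intro exI[of _ \<sigma>] exI[of _ w]) auto
  qed
  then obtain \<mu> u where u: "(\<Sum>i<N. u i) = 0" "\<exists>i<N. u i \<noteq> 0" "\<forall>i<N. mv A N u i = \<mu> * u i" "\<bar>\<mu>\<bar> = \<sigma>"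
    by blast
  have "\<bar>\<mu>\<bar> \<le> beta_mat N A"
  proof (rule eig_bound[OF A sym N ones beta])
    show "vec N u \<in> carrier_vec N" by simp
    show "vec N u \<noteq> 0\<^sub>v N"
    proof
      assume "vec N u = 0\<^sub>v N"
      then have "\<forall>i<N. vec N u $ i = 0\<^sub>v N $ i" by simp
      with u(2) show False by auto
    qed
    show "A *\<^sub>v vec N u = \<mu> \<cdot>\<^sub>v vec N u"
    proof (rule eq_vecI)
      fix i assume "i < dim_vec (\<mu> \<cdot>\<^sub>v vec N u)"
      then have i: "i < N" by simp
      show "(A *\<^sub>v vec N u) $ i = (\<mu> \<cdot>\<^sub>v vec N u) $ i"
        using mult_vec_mv[OF A i, of u] u(3) i by simp
    qed (use A in simp)
    show "(\<Sum>i<N. vec N u $ i) = 0" using u(1) by simp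
  qed
  with u(4) \<sigma>gt show False unfolding \<beta>_def by simp
qed





lemma norm2_basis: "(norm (w::'v::euclidean_space))\<^sup>2 = (\<Sum>b\<in>Basis. (w \<bullet> b)\<^sup>2)"
  by (subst power2_norm_eq_inner, subst euclidean_inner) (simp add: power2_eq_square)

lemma vec_contraction:
  fixes A :: "real mat" and d :: "nat \<Rightarrow> 'v::euclidean_space"
  assumes A: "A \<in> carrier_mat N N" and N: "N \<ge> 1"
    and sym: "\<forall>i<N. \<forall>j<N. A$$(i,j) = A$$(j,i)"
    and nn: "\<forall>i<N. \<forall>j<N. A $$ (i, j) \<ge> 0"
    and rows: "\<forall>i<N. (\<Sum>j<N. A $$ (i, j)) = 1"
    and cols: "\<forall>j<N. (\<Sum>i<N. A $$ (i, j)) = 1"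
    and beta: "beta_mat N A < 1"
    and d0: "(\<Sum>j<N. d j) = 0"
  shows "(\<Sum>i<N. (norm (\<Sum>j<N. A$$(i,j) *\<^sub>R d j))\<^sup>2) \<le> (beta_mat N A)\<^sup>2 * (\<Sum>i<N. (norm (d i))\<^sup>2)"
proof -
  have "(\<Sum>i<N. (norm (\<Sum>j<N. A$$(i,j) *\<^sub>R d j))\<^sup>2) = (\<Sum>i<N. \<Sum>b\<in>Basis. (\<Sum>j<N. A$$(i,j) * (d j \<bullet> b))\<^sup>2)"
    by (simp add: norm2_basis inner_sum_left)
  also have "\<dots> = (\<Sum>b\<in>Basis. nsq N (mv A N (\<lambda>j. d j \<bullet> b)))"
    unfolding nsq_def mv_def by (rule sum.swap)
  also have "\<dots> \<le> (\<Sum>b\<in>(Basis::'v set). (beta_mat N A)\<^sup>2 * nsq N (\<lambda>j. d j \<bullet> b))"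
  proof (rule sum_mono)
    fix b :: 'v assume "b \<in> Basis"
    have "(\<Sum>j<N. d j \<bullet> b) = (\<Sum>j<N. d j) \<bullet> b" by (simp add: inner_sum_left)
    then have "(\<Sum>j<N. d j \<bullet> b) = 0" using d0 by simp
    then show "nsq N (mv A N (\<lambda>j. d j \<bullet> b)) \<le> (beta_mat N A)\<^sup>2 * nsq N (\<lambda>j. d j \<bullet> b)"
      by (rule contraction[OF A N sym nn rows cols beta])
  qed
  also have "\<dots> = (beta_mat N A)\<^sup>2 * (\<Sum>i<N. (norm (d i))\<^sup>2)"
    unfolding nsq_def norm2_basis by (simp add: sum_distrib_left) (rule sum.swap)
  finally show ?thesis .
qed

lemma L2_triangle:
  fixes a b :: "nat \<Rightarrow> 'v::real_normed_vector"
  shows "sqrt (\<Sum>i<N. (norm (a i + b i))\<^sup>2) \<le> sqrt (\<Sum>i<N. (norm (a i))\<^sup>2) + sqrt (\<Sum>i<N. (norm (b i))\<^sup>2)"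
proof -
  have "sqrt (\<Sum>i<N. (norm (a i + b i))\<^sup>2) = L2_set (\<lambda>i. norm (a i + b i)) {..<N}"
    unfolding L2_set_def ..
  also have "\<dots> \<le> L2_set (\<lambda>i. norm (a i) + norm (b i)) {..<N}"
    by (rule L2_set_mono) (auto intro: norm_triangle_ineq)
  also have "\<dots> \<le> L2_set (\<lambda>i. norm (a i)) {..<N} + L2_set (\<lambda>i. norm (b i)) {..<N}"
    by (rule L2_set_triangle_ineq)
  finally show ?thesis unfolding L2_set_def .
qed

lemma centered_bound:
  fixes v :: "nat \<Rightarrow> 'v::real_inner"
  assumes "\<forall>i<N. norm (v i) \<le> r"
  shows "(\<Sum>i<N. (norm (v i - (1 / real N) *\<^sub>R (\<Sum>l<N. v l)))\<^sup>2) \<le> real N * r\<^sup>2"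
proof -
  define m where "m = (1 / real N) *\<^sub>R (\<Sum>l<N. v l)"
  have sm: "(\<Sum>l<N. v l) = real N *\<^sub>R m"
  proof (cases "N = 0")
    case True then show ?thesis by simp
  next
    case False then show ?thesis unfolding m_def by simp
  qed
  have "(\<Sum>i<N. (norm (v i - m))\<^sup>2) = (\<Sum>i<N. (norm (v i))\<^sup>2 - 2 * (v i \<bullet> m) + (norm m)\<^sup>2)"
    by (intro sum.cong) (auto simp: power2_norm_eq_inner inner_diff_left inner_diff_right inner_commute algebra_simps)
  also have "\<dots> = (\<Sum>i<N. (norm (v i))\<^sup>2) - 2 * ((\<Sum>i<N. v i) \<bullet> m) + real N * (norm m)\<^sup>2"
    by (simp add: sum.distrib sum_subtractf inner_sum_left sum_distrib_left)
  also have "\<dots> = (\<Sum>i<N. (norm (v i))\<^sup>2) - real N * (norm m)\<^sup>2"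
    unfolding sm by (simp add: power2_norm_eq_inner)
  also have "\<dots> \<le> (\<Sum>i<N. (norm (v i))\<^sup>2)" by simp
  also have "\<dots> \<le> (\<Sum>i<N. r\<^sup>2)"
    using assms by (intro sum_mono power_mono) auto
  finally show ?thesis unfolding m_def by simp
qed





theorem lemma3:
  fixes N K Q :: nat
    and Kset :: "'v::euclidean_space set"
    and Nb :: "nat \<Rightarrow> nat set"
    and A :: "real mat"
    and v :: "nat \<Rightarrow> nat \<Rightarrow> nat \<Rightarrow> 'v"
  assumes "N \<ge> 1" and "K \<ge> 1"
    and "convex Kset" and "bounded Kset"
    and "undirected_graph N Nb" and "connected_graph N Nb"
    and "A \<in> carrier_mat N N"
    and "\<forall>i<N. \<forall>j<N. A $$ (i, j) \<ge> 0"
    and "\<forall>i<N. \<forall>j<N. j \<notin> Nb i \<union> {i} \<longrightarrow> A $$ (i, j) = 0"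
    and "A = transpose_mat A"
    and "\<forall>i<N. (\<Sum>j<N. A $$ (i, j)) = 1"
    and "\<forall>j<N. (\<Sum>i<N. A $$ (i, j)) = 1"
    and "beta_mat N A < 1"
    and "\<forall>q\<in>{1..Q}. \<forall>k\<in>{1..K}. \<forall>i<N. v q k i \<in> Kset"
    and "k \<in> {1..K}" and "q \<in> {1..Q}"
  shows "sqrt (\<Sum>i<N. (norm (dmfw_x A Nb K v q k i
            - (1 / real N) *\<^sub>R (\<Sum>l<N. dmfw_x A Nb K v q k l)))\<^sup>2)
         \<le> sqrt (real N) * rK Kset / (real K * (1 - beta_mat N A))"
proof -
  note as = assms
  have Ac: "A \<in> carrier_mat N N" and N1: "N \<ge> 1" and K1: "K \<ge> 1" using as by auto
  have sym: "\<forall>i<N. \<forall>j<N. A$$(i,j) = A$$(j,i)"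
  proof (intro allI impI)
    fix i j assume "i < N" "j < N"
    then have "transpose_mat A $$ (i,j) = A $$ (j,i)" using Ac by simp
    then show "A$$(i,j) = A$$(j,i)" using as(10) by simp
  qed
  have nn: "\<forall>i<N. \<forall>j<N. A $$ (i, j) \<ge> 0" using as by simp
  have rows: "\<forall>i<N. (\<Sum>j<N. A $$ (i, j)) = 1" using as by simp
  have cols: "\<forall>j<N. (\<Sum>i<N. A $$ (i, j)) = 1" using as by simp
  have beta: "beta_mat N A < 1" using as by simp
  define \<beta> where "\<beta> = beta_mat N A"
  have bnn: "\<beta> \<ge> 0" unfolding \<beta>_def beta_mat_def by simp
  have b1: "\<beta> < 1" using beta unfolding \<beta>_def .
  define r where "r = rK Kset"
  have bdd: "bdd_above (norm ` Kset)"
    using as(4) unfolding bounded_iff bdd_above_def by auto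
  have vb: "norm (v q k' i) \<le> r" if "k' \<in> {1..K}" "i < N" for k' i
  proof -
    have "v q k' i \<in> Kset" using as(14) as(16) that by blast
    then show ?thesis unfolding r_def rK_def by (rule cSUP_upper[OF _ bdd])
  qed
  have rnn: "r \<ge> 0"
  proof -
    have "norm (v q 1 0) \<le> r" using K1 N1 by (intro vb) auto
    then show ?thesis using norm_ge_zero[of "v q 1 0"] by linarith
  qed
  let ?x = "\<lambda>k i. dmfw_x A Nb K v q k i"
  have step: "?x (Suc k) i = (\<Sum>j<N. A$$(i,j) *\<^sub>R ?x k j) + (1 / real K) *\<^sub>R v q (Suc k) i"
    if i: "i < N" for k i
  proof -
    have sub: "Nb i \<union> {i} \<subseteq> {..<N}" using as(5) i unfolding undirected_graph_def by auto
    have "(\<Sum>j\<in>Nb i \<union> {i}. A$$(i,j) *\<^sub>R ?x k j) = (\<Sum>j<N. A$$(i,j) *\<^sub>R ?x k j)"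
      by (rule sum.mono_neutral_left[OF _ sub]) (use as(9) i in auto)
    then show ?thesis by simp
  qed
  define xb where "xb = (\<lambda>k. (1 / real N) *\<^sub>R (\<Sum>l<N. ?x k l))"
  define vbar where "vbar = (\<lambda>k. (1 / real N) *\<^sub>R (\<Sum>l<N. v q k l))"
  define d where "d = (\<lambda>k i. ?x k i - xb k)"
  define E where "E = (\<lambda>k. sqrt (\<Sum>i<N. (norm (d k i))\<^sup>2))"
  have dsum: "(\<Sum>j<N. d k j) = 0" for k
    unfolding d_def xb_def using N1 by (simp add: sum_subtractf sum_constant_scaleR)
  have xbS: "xb (Suc k) = xb k + (1 / real K) *\<^sub>R vbar (Suc k)" for k
  proof -
    have "(\<Sum>i<N. ?x (Suc k) i) = (\<Sum>i<N. \<Sum>j<N. A$$(i,j) *\<^sub>R ?x k j) + (1 / real K) *\<^sub>R (\<Sum>i<N. v q (Suc k) i)"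
      using step by (simp add: sum.distrib scaleR_sum_right)
    also have "(\<Sum>i<N. \<Sum>j<N. A$$(i,j) *\<^sub>R ?x k j) = (\<Sum>j<N. (\<Sum>i<N. A$$(i,j)) *\<^sub>R ?x k j)"
      by (subst sum.swap) (simp add: scaleR_sum_left)
    also have "\<dots> = (\<Sum>j<N. ?x k j)" using cols by simp
    finally show ?thesis unfolding xb_def vbar_def by (simp add: scaleR_add_right)
  qed
  have dS: "d (Suc k) i = (\<Sum>j<N. A$$(i,j) *\<^sub>R d k j) + (1 / real K) *\<^sub>R (v q (Suc k) i - vbar (Suc k))"
    if i: "i < N" for k i
  proof -
    have "(\<Sum>j<N. A$$(i,j) *\<^sub>R d k j) = (\<Sum>j<N. A$$(i,j) *\<^sub>R ?x k j) - (\<Sum>j<N. A$$(i,j)) *\<^sub>R xb k"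
      unfolding d_def by (simp add: scaleR_diff_right sum_subtractf scaleR_sum_left)
    also have "(\<Sum>j<N. A$$(i,j)) = 1" using rows i by simp
    finally have "(\<Sum>j<N. A$$(i,j) *\<^sub>R d k j) = (\<Sum>j<N. A$$(i,j) *\<^sub>R ?x k j) - xb k" by simp
    then show ?thesis unfolding d_def using step[OF i, of k] xbS[of k]
      by (simp add: algebra_simps)
  qed
  define c where "c = sqrt (real N) * r / real K"
  have cnn: "c \<ge> 0" unfolding c_def using rnn by simp
  have Ebound: "k \<le> K \<Longrightarrow> E k \<le> c * (\<Sum>t<k. \<beta> ^ t)" for k
  proof (induct k)
    case 0
    have "d 0 i = 0" for i unfolding d_def xb_def by simp
    then show ?case unfolding E_def by simp
  next
    case (Suc k)
    then have IH: "E k \<le> c * (\<Sum>t<k. \<beta> ^ t)" by simp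
    define a where "a = (\<lambda>i. \<Sum>j<N. A$$(i,j) *\<^sub>R d k j)"
    define b where "b = (\<lambda>i. (1 / real K) *\<^sub>R (v q (Suc k) i - vbar (Suc k)))"
    have "E (Suc k) = sqrt (\<Sum>i<N. (norm (a i + b i))\<^sup>2)"
      unfolding E_def a_def b_def using dS by simp
    also have "\<dots> \<le> sqrt (\<Sum>i<N. (norm (a i))\<^sup>2) + sqrt (\<Sum>i<N. (norm (b i))\<^sup>2)"
      by (rule L2_triangle)
    also have "sqrt (\<Sum>i<N. (norm (a i))\<^sup>2) \<le> \<beta> * E k"
    proof -
      have "(\<Sum>i<N. (norm (a i))\<^sup>2) \<le> \<beta>\<^sup>2 * (\<Sum>i<N. (norm (d k i))\<^sup>2)"
        unfolding a_def \<beta>_def by (rule vec_contraction[OF Ac N1 sym nn rows cols beta dsum])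
      then have "sqrt (\<Sum>i<N. (norm (a i))\<^sup>2) \<le> sqrt (\<beta>\<^sup>2 * (\<Sum>i<N. (norm (d k i))\<^sup>2))"
        by (rule real_sqrt_le_mono)
      also have "\<dots> = \<beta> * E k" unfolding E_def using bnn by (simp add: real_sqrt_mult)
      finally show ?thesis .
    qed
    also have "sqrt (\<Sum>i<N. (norm (b i))\<^sup>2) \<le> c"
    proof -
      have vk: "\<forall>i<N. norm (v q (Suc k) i) \<le> r" using vb Suc(2) by simp
      have "(\<Sum>i<N. (norm (b i))\<^sup>2) = (1 / real K)\<^sup>2 * (\<Sum>i<N. (norm (v q (Suc k) i - vbar (Suc k)))\<^sup>2)"
        unfolding b_def by (simp add: sum_distrib_left power_mult_distrib power_divide)
      also have "\<dots> \<le> (1 / real K)\<^sup>2 * (real N * r\<^sup>2)"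
        unfolding vbar_def by (intro mult_left_mono centered_bound vk) simp
      finally have "sqrt (\<Sum>i<N. (norm (b i))\<^sup>2) \<le> sqrt ((1 / real K)\<^sup>2 * (real N * r\<^sup>2))"
        by (rule real_sqrt_le_mono)
      also have "\<dots> = c" unfolding c_def using rnn
        by (simp add: real_sqrt_mult)
      finally show ?thesis .
    qed
    also have "\<beta> * E k + c \<le> \<beta> * (c * (\<Sum>t<k. \<beta> ^ t)) + c"
      using IH bnn by (simp add: mult_left_mono)
    also have "\<dots> = c * (\<Sum>t<Suc k. \<beta> ^ t)"
      by (subst sum.lessThan_Suc_shift) (simp add: sum_distrib_left algebra_simps)
    finally show ?case by simp
  qed
  have geo: "(\<Sum>t<k. \<beta> ^ t) \<le> 1 / (1 - \<beta>)"
  proof -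
    have "(\<Sum>t<k. \<beta> ^ t) = (1 - \<beta> ^ k) / (1 - \<beta>)" using b1 by (simp add: sum_gp_strict)
    also have "\<dots> \<le> 1 / (1 - \<beta>)" using b1 bnn by (intro divide_right_mono) auto
    finally show ?thesis .
  qed
  have "E k \<le> c * (1 / (1 - \<beta>))"
    using Ebound[of k] as(15) mult_left_mono[OF geo cnn] by simp
  also have "\<dots> = sqrt (real N) * rK Kset / (real K * (1 - beta_mat N A))"
    unfolding c_def r_def \<beta>_def by simp
  finally show ?thesis unfolding E_def d_def xb_def .
qed



end
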